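(* Suppose $\kappa<\lambda$ are infinite regular cardinals and $\square^{\mathrm{ind}}(\lambda,\kappa)$ holds. Then there is a function $d:[\lambda]^2\to\kappa$ such that: (1) for all $\alpha<\beta<\gamma<\lambda$, $d(\alpha,\gamma)\le\max(d(\alpha,\beta),d(\beta,\gamma))$; (2) for all $\alpha<\beta<\gamma<\lambda$, $d(\alpha,\beta)\le\max(d(\alpha,\gamma),d(\beta,\gamma))$; (3) for every unbounded $I\subseteq\lambda$, $d``[I]^2$ is unbounded in $\kappa$.
   Context: $d(\alpha,\beta)$ denotes $d(\{\alpha,\beta\})$. For a set $C$ of ordinals, $C'$ is its set of limit points $\{\alpha\in C\mid\sup(C\cap\alpha)=\alpha\}$ (for a club $C$ in $\beta$, $\alpha<\beta$ is in $C'$ iff $\sup(C\cap\alpha)=\alpha$). For infinite regular $\kappa<\lambda$, a $\square^{\mathrm{ind}}(\lambda,\kappa)$-sequence is a matrix $\langle C_{\alpha,i}\mid\alpha<\lambda,\ i(\alpha)\le i<\kappa\rangle$ such that: (1) for all limit $\alpha<\lambda$, $i(\alpha)<\kappa$; (2) for all limit $\alpha$ and $i(\alpha)\le i<\kappa$, $C_{\alpha,i}$ is club in $\alpha$; (3) for all limit $\alpha$ and $i(\alpha)\le i<j<\kappa$, $C_{\alpha,i}\subseteq C_{\alpha,j}$; (4) for all limit $\alpha<\beta<\lambda$ and $i(\beta)\le i<\kappa$, if $\alpha\in C'_{\beta,i}$ then $i(\alpha)\le i$ and $C_{\beta,i}\cap\alpha=C_{\alpha,i}$; (5) for all limit $\alpha<\beta<\lambda$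 there is $i<\kappa$ with $\alpha\in C'_{\beta,i}$; (6) there is no club $D\subseteq\lambda$ such that for every $\alpha\in D'$ there is $i<\kappa$ with $D\cap\alpha=C_{\alpha,i}$. $\square^{\mathrm{ind}}(\lambda,\kappa)$ asserts the existence of such a sequence. *)

theory Defs
  imports Main
begin

text \<open>Ordinals below a cardinal are modelled as elements of the field of a
cardinal order (initial-ordinal well-order) r; the ordinal order is r itself.\<close>

definition olt :: "'a rel \<Rightarrow> 'a \<Rightarrow> 'a \<Rightarrow> bool" where
  "olt r x y \<equiv> (x, y) \<in> r \<and> x \<noteq> y"

definition is_limit :: "'a rel \<Rightarrow> 'a \<Rightarrow> bool" where
  "is_limit r \<alpha> \<equiv> \<alpha> \<in> Field r \<and> (\<exists>\<beta>. olt r \<beta> \<alpha>) \<and>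
     (\<forall>\<beta>. olt r \<beta> \<alpha> \<longrightarrow> (\<exists>\<gamma>. olt r \<beta> \<gamma> \<and> olt r \<gamma> \<alpha>))"

definition acc_pt :: "'a rel \<Rightarrow> 'a set \<Rightarrow> 'a \<Rightarrow> bool" where
  "acc_pt r C \<alpha> \<equiv> (\<exists>\<beta>. olt r \<beta> \<alpha>) \<and>
     (\<forall>\<beta>. olt r \<beta> \<alpha> \<longrightarrow> (\<exists>\<gamma>\<in>C. olt r \<beta> \<gamma> \<and> olt r \<gamma> \<alpha>))"

definition lim_pts :: "'a rel \<Rightarrow> 'a set \<Rightarrow> 'a set" where
  "lim_pts r C = {\<alpha> \<in> C. acc_pt r C \<alpha>}"

definition club_in :: "'a rel \<Rightarrow> 'a set \<Rightarrow> 'a \<Rightarrow> bool" where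
  "club_in r C \<alpha> \<equiv> C \<subseteq> {\<xi>. olt r \<xi> \<alpha>} \<and>
     (\<forall>\<beta>. olt r \<beta> \<alpha> \<longrightarrow> (\<exists>\<gamma>\<in>C. (\<beta>, \<gamma>) \<in> r)) \<and>
     (\<forall>\<beta>. olt r \<beta> \<alpha> \<longrightarrow> acc_pt r C \<beta> \<longrightarrow> \<beta> \<in> C)"

definition club_top :: "'a rel \<Rightarrow> 'a set \<Rightarrow> bool" where
  "club_top r D \<equiv> D \<subseteq> Field r \<and>
     (\<forall>\<beta>\<in>Field r. \<exists>\<gamma>\<in>D. (\<beta>, \<gamma>) \<in> r) \<and>
     (\<forall>\<beta>\<in>Field r. acc_pt r D \<beta> \<longrightarrow> \<beta> \<in> D)"

text \<open>square^ind(\<lambda>,\<kappa>)-sequence: \<lambda> = Field r, \<kappa> = Field k,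
  C \<alpha> j = C_{\<alpha>,j}, ii \<alpha> = i(\<alpha>).\<close>
definition square_ind_seq ::
  "'a rel \<Rightarrow> 'b rel \<Rightarrow> ('a \<Rightarrow> 'b \<Rightarrow> 'a set) \<Rightarrow> ('a \<Rightarrow> 'b) \<Rightarrow> bool" where
  "square_ind_seq r k C ii \<equiv>
     (\<forall>\<alpha>. is_limit r \<alpha> \<longrightarrow> ii \<alpha> \<in> Field k) \<and>
     (\<forall>\<alpha> j. is_limit r \<alpha> \<longrightarrow> (ii \<alpha>, j) \<in> k \<longrightarrow> club_in r (C \<alpha> j) \<alpha>) \<and>
     (\<forall>\<alpha> j j'. is_limit r \<alpha> \<longrightarrow> (ii \<alpha>, j) \<in> k \<longrightarrow> olt k j j' \<longrightarrow> C \<alpha> j \<subseteq> C \<alpha> j') \<and>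
     (\<forall>\<alpha> \<beta> j. is_limit r \<alpha> \<longrightarrow> is_limit r \<beta> \<longrightarrow> olt r \<alpha> \<beta> \<longrightarrow> (ii \<beta>, j) \<in> k \<longrightarrow>
        \<alpha> \<in> lim_pts r (C \<beta> j) \<longrightarrow>
        (ii \<alpha>, j) \<in> k \<and> C \<beta> j \<inter> {\<xi>. olt r \<xi> \<alpha>} = C \<alpha> j) \<and>
     (\<forall>\<alpha> \<beta>. is_limit r \<alpha> \<longrightarrow> is_limit r \<beta> \<longrightarrow> olt r \<alpha> \<beta> \<longrightarrow>
        (\<exists>j. (ii \<beta>, j) \<in> k \<and> \<alpha> \<in> lim_pts r (C \<beta> j))) \<and>
     \<not> (\<exists>D. club_top r D \<and>
          (\<forall>\<alpha>\<in>lim_pts r D. \<exists>j. (ii \<alpha>, j) \<in> k \<and> D \<inter> {\<xi>. olt r \<xi> \<alpha>} = C \<alpha> j))"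

definition square_ind :: "'a rel \<Rightarrow> 'b rel \<Rightarrow> bool" where
  "square_ind r k \<equiv> \<exists>C ii. square_ind_seq r k C ii"

end

theory Submission
  imports Defs
begin

unbundle cardinal_syntax


lemma co_props:
  assumes "Card_order r"
  shows co_trans: "\<And>x y z. (x,y)\<in>r \<Longrightarrow> (y,z)\<in>r \<Longrightarrow> (x,z)\<in>r"
    and co_antisym: "\<And>x y. (x,y)\<in>r \<Longrightarrow> (y,x)\<in>r \<Longrightarrow> x = y"
    and co_total: "\<And>x y. x\<in>Field r \<Longrightarrow> y\<in>Field r \<Longrightarrow> (x,y)\<in>r \<or> (y,x)\<in>r"
    and co_refl: "\<And>x. x\<in>Field r \<Longrightarrow> (x,x)\<in>r"
proof -
  have wo: "wo_rel r" using assms by (rule Card_order_wo_rel)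
  show "\<And>x y z. (x,y)\<in>r \<Longrightarrow> (y,z)\<in>r \<Longrightarrow> (x,z)\<in>r"
    using wo_rel.TRANS[OF wo] unfolding trans_def by blast
  show "\<And>x y. (x,y)\<in>r \<Longrightarrow> (y,x)\<in>r \<Longrightarrow> x = y"
    using wo_rel.ANTISYM[OF wo] unfolding antisym_def by blast
  show "\<And>x y. x\<in>Field r \<Longrightarrow> y\<in>Field r \<Longrightarrow> (x,y)\<in>r \<or> (y,x)\<in>r"
    using wo_rel.TOTALS[OF wo] by blast
  show "\<And>x. x\<in>Field r \<Longrightarrow> (x,x)\<in>r"
    using wo_rel.REFL[OF wo] unfolding refl_on_def by blast
qed

lemma olt_trans:
  assumes "Card_order r" "olt r x y" "olt r y z" shows "olt r x z"
  using assms co_trans[OF assms(1)] co_antisym[OF assms(1)] unfolding olt_def by blast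

lemma olt_le_trans:
  assumes "Card_order r" "olt r x y" "(y,z) \<in> r" shows "olt r x z"
  using assms co_trans[OF assms(1)] co_antisym[OF assms(1)] unfolding olt_def by blast

lemma le_olt_trans:
  assumes "Card_order r" "(x,y) \<in> r" "olt r y z" shows "olt r x z"
  using assms co_trans[OF assms(1)] co_antisym[OF assms(1)] unfolding olt_def by blast

lemma olt_field: "olt r x y \<Longrightarrow> x \<in> Field r \<and> y \<in> Field r"
  unfolding olt_def by (auto intro: FieldI1 FieldI2)

lemma not_olt:
  assumes "Card_order r" "x \<in> Field r" "y \<in> Field r" "\<not> olt r x y" shows "(y,x) \<in> r"
  using assms co_total[OF assms(1)] co_refl[OF assms(1)] unfolding olt_def by blast

lemma limit_above:
  assumes cr: "Cinfinite r" and reg: "regularCard r" and nl: "natLeq <o r"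
    and a: "\<alpha> \<in> Field r"
  shows "\<exists>\<mu>. is_limit r \<mu> \<and> olt r \<alpha> \<mu>"
proof -
  have co: "Card_order r" using cr by simp
  have "\<forall>\<gamma>\<in>Field r. \<exists>\<delta>. \<delta> \<in> Field r \<and> olt r \<gamma> \<delta>"
    using Cinfinite_limit[OF _ cr] unfolding olt_def by fastforce
  then obtain s where s0: "\<forall>\<gamma>\<in>Field r. s \<gamma> \<in> Field r \<and> olt r \<gamma> (s \<gamma>)"
    by (rule bchoice[elim_format]) blast
  have s: "\<And>\<gamma>. \<gamma>\<in>Field r \<Longrightarrow> s \<gamma> \<in> Field r \<and> olt r \<gamma> (s \<gamma>)" using s0 by blast
  define f where "f n = (s ^^ n) \<alpha>" for n
  have fF: "f n \<in> Field r" for n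
    by (induction n) (auto simp: f_def a s)
  have fs: "olt r (f n) (f (Suc n))" for n
    using s[OF fF[of n]] by (simp add: f_def)
  have "|range f| <o r"
  proof -
    have "|range f| \<le>o |UNIV::nat set|" by (rule card_of_image)
    also have "|UNIV::nat set| =o natLeq" by (rule card_of_nat)
    finally show ?thesis using nl ordLeq_ordLess_trans by blast
  qed
  hence "\<not> cofinal (range f) r"
  proof (intro notI)
    assume "|range f| <o r" "cofinal (range f) r"
    moreover have "range f \<subseteq> Field r" using fF by auto
    ultimately show False using reg not_ordLess_ordIso unfolding regularCard_def by blast
  qed
  then obtain b where b: "b \<in> Field r" "\<forall>n. \<not> olt r b (f n)"
    unfolding cofinal_def olt_def by auto
  have bB: "\<forall>n. olt r (f n) b"
  proof
    fix n
    have "(f (Suc n), b) \<in> r" using not_olt[OF co b(1) fF b(2)[rule_format]] .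
    then show "olt r (f n) b" using olt_le_trans[OF co fs] by blast
  qed
  define B where "B = {x \<in> Field r. \<forall>n. olt r (f n) x}"
  have wo: "wo_rel r" using co by (rule Card_order_wo_rel)
  have BF: "B \<subseteq> Field r" "B \<noteq> {}" using b bB unfolding B_def by auto
  define \<mu> where "\<mu> = wo_rel.minim r B"
  have muB: "\<mu> \<in> B" using wo_rel.minim_in[OF wo BF] unfolding \<mu>_def .
  have muL: "\<And>x. x \<in> B \<Longrightarrow> (\<mu>, x) \<in> r" using wo_rel.minim_least[OF wo BF(1)] unfolding \<mu>_def by blast
  have "is_limit r \<mu>"
    unfolding is_limit_def
  proof (intro conjI allI impI)
    show "\<mu> \<in> Field r" using muB B_def by auto
    show "\<exists>\<beta>. olt r \<beta> \<mu>" using muB B_def by auto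
    fix \<beta> assume bm: "olt r \<beta> \<mu>"
    have "\<beta> \<notin> B"
    proof
      assume "\<beta> \<in> B" then have "(\<mu>, \<beta>) \<in> r" by (rule muL)
      with bm show False using co_antisym[OF co] unfolding olt_def by blast
    qed
    moreover have "\<beta> \<in> Field r" using olt_field[OF bm] by simp
    ultimately obtain n where "\<not> olt r (f n) \<beta>" unfolding B_def by auto
    then have "(\<beta>, f n) \<in> r" using not_olt[OF co fF] \<open>\<beta> \<in> Field r\<close> by blast
    then have "olt r \<beta> (f (Suc n))" using le_olt_trans[OF co _ fs] by blast
    moreover have "olt r (f (Suc n)) \<mu>" using muB B_def by auto
    ultimately show "\<exists>\<gamma>. olt r \<beta> \<gamma> \<and> olt r \<gamma> \<mu>" by blast
  qed
  moreover have "olt r \<alpha> \<mu>" using muB unfolding B_def proof -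
    have "olt r (f 0) \<mu>" using muB unfolding B_def by blast
    then show ?thesis by (simp add: f_def)
  qed
  ultimately show ?thesis by blast
qed


lemma acc_restrict:
  assumes co: "Card_order r" and a: "acc_pt r X a" and ab: "olt r a b"
    and sub: "X \<inter> {\<xi>. olt r \<xi> b} \<subseteq> Y"
  shows "acc_pt r Y a"
  unfolding acc_pt_def
proof (intro conjI allI impI)
  show "\<exists>\<beta>. olt r \<beta> a" using a unfolding acc_pt_def by blast
  fix \<beta> assume "olt r \<beta> a"
  then obtain \<gamma> where g: "\<gamma> \<in> X" "olt r \<beta> \<gamma>" "olt r \<gamma> a" using a unfolding acc_pt_def by blast
  have "olt r \<gamma> b" using olt_trans[OF co g(3) ab] .
  then have "\<gamma> \<in> Y" using sub g(1) by blast
  then show "\<exists>\<gamma>\<in>Y. olt r \<beta> \<gamma> \<and> olt r \<gamma> a" using g by blast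
qed

locale sqctx =
  fixes r :: "'a rel" and k :: "'b rel" and C :: "'a \<Rightarrow> 'b \<Rightarrow> 'a set" and ii :: "'a \<Rightarrow> 'b"
  assumes cir: "Cinfinite r" and regr: "regularCard r" and cik: "Cinfinite k"
    and kr: "(k, r) \<in> ordLess" and sq: "square_ind_seq r k C ii"
begin

lemma cor: "Card_order r" using cir by simp
lemma cok: "Card_order k" using cik by simp

lemmas sqU = sq[unfolded square_ind_seq_def]
lemmas S1 = conjunct1[OF sqU, rule_format]
lemmas S2 = conjunct1[OF conjunct2[OF sqU], rule_format]
lemmas S3 = conjunct1[OF conjunct2[OF conjunct2[OF sqU]], rule_format]
lemmas S4 = conjunct1[OF conjunct2[OF conjunct2[OF conjunct2[OF sqU]]], rule_format]
lemmas S5 = conjunct1[OF conjunct2[OF conjunct2[OF conjunct2[OF conjunct2[OF sqU]]]], rule_format]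
lemmas S6 = conjunct2[OF conjunct2[OF conjunct2[OF conjunct2[OF conjunct2[OF sqU]]]]]

lemma nl: "natLeq <o r"
  using natLeq_ordLeq_cinfinite[OF cik] kr ordLeq_ordLess_trans by blast

definition L :: "'a \<Rightarrow> 'a" where
  "L \<alpha> = wo_rel.minim r {\<mu>. is_limit r \<mu> \<and> olt r \<alpha> \<mu>}"

lemma L_props:
  assumes "\<alpha> \<in> Field r" shows "is_limit r (L \<alpha>) \<and> olt r \<alpha> (L \<alpha>)"
proof -
  have wo: "wo_rel r" using cor by (rule Card_order_wo_rel)
  have "{\<mu>. is_limit r \<mu> \<and> olt r \<alpha> \<mu>} \<subseteq> Field r" unfolding is_limit_def by blast
  moreover have "{\<mu>. is_limit r \<mu> \<and> olt r \<alpha> \<mu>} \<noteq> {}"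
    using limit_above[OF cir regr nl assms] by blast
  ultimately show ?thesis using wo_rel.minim_in[OF wo] unfolding L_def by blast
qed

lemma L_mono:
  assumes "(\<alpha>, \<beta>) \<in> r" shows "(L \<alpha>, L \<beta>) \<in> r"
proof -
  have wo: "wo_rel r" using cor by (rule Card_order_wo_rel)
  have bF: "\<beta> \<in> Field r" using assms by (auto intro: FieldI2)
  have "L \<beta> \<in> {\<mu>. is_limit r \<mu> \<and> olt r \<alpha> \<mu>}"
    using L_props[OF bF] le_olt_trans[OF cor assms] by blast
  moreover have "{\<mu>. is_limit r \<mu> \<and> olt r \<alpha> \<mu>} \<subseteq> Field r" unfolding is_limit_def by blast
  ultimately show ?thesis using wo_rel.minim_least[OF wo] unfolding L_def by blast
qed

lemma lim_mono:
  assumes b: "is_limit r b" and j: "(ii b, j) \<in> k" and jj: "(j, j') \<in> k"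
  shows "lim_pts r (C b j) \<subseteq> lim_pts r (C b j')"
proof (cases "j = j'")
  case True then show ?thesis by simp
next
  case False
  then have "C b j \<subseteq> C b j'" using S3[OF b j] jj unfolding olt_def by blast
  then show ?thesis unfolding lim_pts_def acc_pt_def by blast
qed

definition e :: "'a \<Rightarrow> 'a \<Rightarrow> 'b" where
  "e a b = wo_rel.minim k {j. (ii b, j) \<in> k \<and> a \<in> lim_pts r (C b j)}"

lemma e_props:
  assumes "is_limit r a" "is_limit r b" "olt r a b"
  shows "e a b \<in> Field k \<and> (ii b, e a b) \<in> k \<and> a \<in> lim_pts r (C b (e a b))"
    and "\<And>j. (ii b, j) \<in> k \<Longrightarrow> a \<in> lim_pts r (C b j) \<Longrightarrow> (e a b, j) \<in> k"
proof -
  have wo: "wo_rel k" using cok by (rule Card_order_wo_rel)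
  have sub: "{j. (ii b, j) \<in> k \<and> a \<in> lim_pts r (C b j)} \<subseteq> Field k" by (auto intro: FieldI2)
  have ne: "{j. (ii b, j) \<in> k \<and> a \<in> lim_pts r (C b j)} \<noteq> {}" using S5[OF assms] by blast
  show "e a b \<in> Field k \<and> (ii b, e a b) \<in> k \<and> a \<in> lim_pts r (C b (e a b))"
    using wo_rel.minim_in[OF wo sub ne] sub unfolding e_def by blast
  show "\<And>j. (ii b, j) \<in> k \<Longrightarrow> a \<in> lim_pts r (C b j) \<Longrightarrow> (e a b, j) \<in> k"
    using wo_rel.minim_least[OF wo sub] unfolding e_def by blast
qed

lemma T1:
  assumes la: "is_limit r a" and lb: "is_limit r b" and lc: "is_limit r c"
    and ab: "olt r a b" and bc: "olt r b c"
    and i1: "(e a b, i) \<in> k" and i2: "(e b c, i) \<in> k"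
  shows "(e a c, i) \<in> k"
proof -
  note E1 = e_props(1)[OF la lb ab] and E2 = e_props(1)[OF lb lc bc]
  have iic: "(ii c, i) \<in> k" using co_trans[OF cok _ i2] E2 by blast
  have iib: "(ii b, i) \<in> k" using co_trans[OF cok _ i1] E1 by blast
  have bL: "b \<in> lim_pts r (C c i)" using lim_mono[OF lc _ i2] E2 by blast
  have aL: "a \<in> lim_pts r (C b i)" using lim_mono[OF lb _ i1] E1 by blast
  have eq: "C c i \<inter> {\<xi>. olt r \<xi> b} = C b i" using S4[OF lb lc bc iic bL] by blast
  have "a \<in> C c i" using aL eq ab unfolding lim_pts_def by blast
  moreover have "acc_pt r (C c i) a"
    using acc_restrict[OF cor _ ab, of "C b i" "C c i"] aL eq unfolding lim_pts_def by blast
  ultimately have "a \<in> lim_pts r (C c i)" unfolding lim_pts_def by blast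
  then show ?thesis using e_props(2)[OF la lc olt_trans[OF cor ab bc] iic] by blast
qed

lemma T2:
  assumes la: "is_limit r a" and lb: "is_limit r b" and lc: "is_limit r c"
    and ab: "olt r a b" and bc: "olt r b c"
    and i1: "(e a c, i) \<in> k" and i2: "(e b c, i) \<in> k"
  shows "(e a b, i) \<in> k"
proof -
  have ac: "olt r a c" using olt_trans[OF cor ab bc] .
  note E1 = e_props(1)[OF la lc ac] and E2 = e_props(1)[OF lb lc bc]
  have iic: "(ii c, i) \<in> k" using co_trans[OF cok _ i2] E2 by blast
  have bL: "b \<in> lim_pts r (C c i)" using lim_mono[OF lc _ i2] E2 by blast
  have aL: "a \<in> lim_pts r (C c i)" using lim_mono[OF lc _ i1] E1 by blast
  have S: "(ii b, i) \<in> k \<and> C c i \<inter> {\<xi>. olt r \<xi> b} = C b i" using S4[OF lb lc bc iic bL] by blast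
  have "a \<in> C b i" using aL S ab unfolding lim_pts_def by blast
  moreover have "acc_pt r (C b i) a"
    using acc_restrict[OF cor _ ab, of "C c i" "C b i"] aL S unfolding lim_pts_def by blast
  ultimately have "a \<in> lim_pts r (C b i)" unfolding lim_pts_def by blast
  then show ?thesis using e_props(2)[OF la lb ab] S by blast
qed

definition z :: 'b where "z = wo_rel.minim k (Field k)"

lemma z_props: "z \<in> Field k" "\<And>j. j \<in> Field k \<Longrightarrow> (z, j) \<in> k"
proof -
  have wo: "wo_rel k" using cok by (rule Card_order_wo_rel)
  have ne: "Field k \<noteq> {}" using cik unfolding cinfinite_def by auto
  show "z \<in> Field k" using wo_rel.minim_in[OF wo _ ne] unfolding z_def by blast
  show "\<And>j. j \<in> Field k \<Longrightarrow> (z, j) \<in> k" using wo_rel.minim_least[OF wo] unfolding z_def by blast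
qed

definition D2 :: "'a \<Rightarrow> 'a \<Rightarrow> 'b" where
  "D2 \<alpha> \<beta> = (if L \<alpha> = L \<beta> then z else e (L \<alpha>) (L \<beta>))"

lemma L_lt:
  assumes "olt r \<alpha> \<beta>" "L \<alpha> \<noteq> L \<beta>"
  shows "olt r (L \<alpha>) (L \<beta>)" "is_limit r (L \<alpha>)" "is_limit r (L \<beta>)"
  using L_mono[of \<alpha> \<beta>] assms L_props olt_field[OF assms(1)] unfolding olt_def by blast+

lemma D2_field: "olt r \<alpha> \<beta> \<Longrightarrow> D2 \<alpha> \<beta> \<in> Field k"
  using z_props(1) e_props(1)[OF L_lt(2,3,1)] unfolding D2_def by (cases "L \<alpha> = L \<beta>") auto

definition d :: "'a set \<Rightarrow> 'b" where
  "d S = (let p = SOME p. S = {fst p, snd p} \<and> olt r (fst p) (snd p) in D2 (fst p) (snd p))"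

lemma d_eq:
  assumes ab: "olt r \<alpha> \<beta>" shows "d {\<alpha>, \<beta>} = D2 \<alpha> \<beta>"
proof -
  define p where "p = (SOME p. {\<alpha>, \<beta>} = {fst p, snd p} \<and> olt r (fst p) (snd p))"
  have "{\<alpha>, \<beta>} = {fst p, snd p} \<and> olt r (fst p) (snd p)"
    unfolding p_def by (rule someI[of _ "(\<alpha>, \<beta>)"]) (simp add: ab)
  moreover have "\<not> olt r \<beta> \<alpha>" using ab co_antisym[OF cor] unfolding olt_def by blast
  ultimately have "fst p = \<alpha> \<and> snd p = \<beta>" using ab unfolding olt_def by (auto simp: doubleton_eq_iff)
  then show ?thesis unfolding d_def p_def[symmetric] by (simp add: Let_def)
qed

lemma prop1:
  assumes ab: "olt r \<alpha> \<beta>" and bc: "olt r \<beta> \<gamma>"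
  shows "(D2 \<alpha> \<gamma>, D2 \<alpha> \<beta>) \<in> k \<or> (D2 \<alpha> \<gamma>, D2 \<beta> \<gamma>) \<in> k"
proof -
  have ac: "olt r \<alpha> \<gamma>" using olt_trans[OF cor ab bc] .
  consider "L \<alpha> = L \<beta>" | "L \<alpha> \<noteq> L \<beta>" "L \<beta> = L \<gamma>" | "L \<alpha> \<noteq> L \<beta>" "L \<beta> \<noteq> L \<gamma>" by blast
  then show ?thesis
  proof cases
    case 1
    then have "D2 \<alpha> \<gamma> = D2 \<beta> \<gamma>" unfolding D2_def by simp
    then show ?thesis using co_refl[OF cok D2_field[OF bc]] by simp
  next
    case 2
    then have "D2 \<alpha> \<gamma> = D2 \<alpha> \<beta>" unfolding D2_def by simp
    then show ?thesis using co_refl[OF cok D2_field[OF ab]] by simp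
  next
    case 3
    note A = L_lt[OF ab 3(1)] and B = L_lt[OF bc 3(2)]
    have ne: "L \<alpha> \<noteq> L \<gamma>" using olt_trans[OF cor A(1) B(1)] unfolding olt_def by blast
    have e1: "D2 \<alpha> \<beta> = e (L \<alpha>) (L \<beta>)" "D2 \<beta> \<gamma> = e (L \<beta>) (L \<gamma>)" "D2 \<alpha> \<gamma> = e (L \<alpha>) (L \<gamma>)"
      using 3 ne unfolding D2_def by auto
    have F: "e (L \<alpha>) (L \<beta>) \<in> Field k" "e (L \<beta>) (L \<gamma>) \<in> Field k"
      using e_props(1)[OF A(2,3,1)] e_props(1)[OF B(2,3,1)] by blast+
    from co_total[OF cok F] show ?thesis
    proof
      assume h: "(e (L \<alpha>) (L \<beta>), e (L \<beta>) (L \<gamma>)) \<in> k"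
      have "(e (L \<alpha>) (L \<gamma>), e (L \<beta>) (L \<gamma>)) \<in> k"
        by (rule T1[OF A(2) A(3) B(3) A(1) B(1) h co_refl[OF cok F(2)]])
      then show ?thesis using e1 by simp
    next
      assume h: "(e (L \<beta>) (L \<gamma>), e (L \<alpha>) (L \<beta>)) \<in> k"
      have "(e (L \<alpha>) (L \<gamma>), e (L \<alpha>) (L \<beta>)) \<in> k"
        by (rule T1[OF A(2) A(3) B(3) A(1) B(1) co_refl[OF cok F(1)] h])
      then show ?thesis using e1 by simp
    qed
  qed
qed

lemma prop2:
  assumes ab: "olt r \<alpha> \<beta>" and bc: "olt r \<beta> \<gamma>"
  shows "(D2 \<alpha> \<beta>, D2 \<alpha> \<gamma>) \<in> k \<or> (D2 \<alpha> \<beta>, D2 \<beta> \<gamma>) \<in> k"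
proof -
  have ac: "olt r \<alpha> \<gamma>" using olt_trans[OF cor ab bc] .
  consider "L \<alpha> = L \<beta>" | "L \<alpha> \<noteq> L \<beta>" "L \<beta> = L \<gamma>" | "L \<alpha> \<noteq> L \<beta>" "L \<beta> \<noteq> L \<gamma>" by blast
  then show ?thesis
  proof cases
    case 1
    then have "D2 \<alpha> \<beta> = z" unfolding D2_def by simp
    then show ?thesis using z_props(2)[OF D2_field[OF ac]] by simp
  next
    case 2
    then have "D2 \<alpha> \<gamma> = D2 \<alpha> \<beta>" unfolding D2_def by simp
    then show ?thesis using co_refl[OF cok D2_field[OF ab]] by simp
  next
    case 3
    note A = L_lt[OF ab 3(1)] and B = L_lt[OF bc 3(2)]
    have AC: "olt r (L \<alpha>) (L \<gamma>)" using olt_trans[OF cor A(1) B(1)] .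
    then have ne: "L \<alpha> \<noteq> L \<gamma>" unfolding olt_def by blast
    have e1: "D2 \<alpha> \<beta> = e (L \<alpha>) (L \<beta>)" "D2 \<beta> \<gamma> = e (L \<beta>) (L \<gamma>)" "D2 \<alpha> \<gamma> = e (L \<alpha>) (L \<gamma>)"
      using 3 ne unfolding D2_def by auto
    have F: "e (L \<alpha>) (L \<gamma>) \<in> Field k" "e (L \<beta>) (L \<gamma>) \<in> Field k"
      using e_props(1)[OF A(2) B(3) AC] e_props(1)[OF B(2,3,1)] by blast+
    from co_total[OF cok F] show ?thesis
    proof
      assume h: "(e (L \<alpha>) (L \<gamma>), e (L \<beta>) (L \<gamma>)) \<in> k"
      have "(e (L \<alpha>) (L \<beta>), e (L \<beta>) (L \<gamma>)) \<in> k"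
        by (rule T2[OF A(2) A(3) B(3) A(1) B(1) h co_refl[OF cok F(2)]])
      then show ?thesis using e1 by simp
    next
      assume h: "(e (L \<beta>) (L \<gamma>), e (L \<alpha>) (L \<gamma>)) \<in> k"
      have "(e (L \<alpha>) (L \<beta>), e (L \<alpha>) (L \<gamma>)) \<in> k"
        by (rule T2[OF A(2) A(3) B(3) A(1) B(1) co_refl[OF cok F(1)] h])
      then show ?thesis using e1 by simp
    qed
  qed
qed

lemma prop3:
  assumes IF: "I \<subseteq> Field r" and Icof: "\<forall>\<beta>\<in>Field r. \<exists>\<gamma>\<in>I. (\<beta>, \<gamma>) \<in> r"
    and jF: "j \<in> Field k"
  shows "\<exists>\<alpha>\<in>I. \<exists>\<beta>\<in>I. \<alpha> \<noteq> \<beta> \<and> (j, d {\<alpha>, \<beta>}) \<in> k"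
proof (rule ccontr)
  assume H: "\<not> ?thesis"
  have Hall: "\<forall>x\<in>I. \<forall>y\<in>I. x \<noteq> y \<longrightarrow> (j, d {x, y}) \<notin> k" using H by blast
  have H': "(D2 \<alpha> \<beta>, j) \<in> k" if "\<alpha> \<in> I" "\<beta> \<in> I" "olt r \<alpha> \<beta>" for \<alpha> \<beta>
  proof -
    have "\<alpha> \<noteq> \<beta>" using that(3) unfolding olt_def by blast
    then have "(j, d {\<alpha>, \<beta>}) \<notin> k" using Hall that(1,2) by simp
    then have "(j, D2 \<alpha> \<beta>) \<notin> k" using d_eq[OF that(3)] by simp
    then show ?thesis using co_total[OF cok jF D2_field[OF that(3)]] by blast
  qed
  define LI where "LI = L ` I"
  have LIlim: "is_limit r b" if bb: "b \<in> LI" for b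
  proof -
    obtain \<alpha> where "\<alpha> \<in> I" "b = L \<alpha>" using bb unfolding LI_def by blast
    then show ?thesis using L_props IF by blast
  qed
  have K1: "(ii b, j) \<in> k \<and> a \<in> lim_pts r (C b j)" if a: "a \<in> LI" and b: "b \<in> LI" and ab: "olt r a b" for a b
  proof -
    obtain \<alpha> \<beta> where ab': "\<alpha> \<in> I" "\<beta> \<in> I" "a = L \<alpha>" "b = L \<beta>" using a b unfolding LI_def by blast
    have F: "\<alpha> \<in> Field r" "\<beta> \<in> Field r" using ab' IF by blast+
    have lt: "olt r \<alpha> \<beta>"
    proof (rule ccontr)
      assume "\<not> olt r \<alpha> \<beta>"
      then have "(\<beta>, \<alpha>) \<in> r" using not_olt[OF cor F] by blast
      then have "(L \<beta>, L \<alpha>) \<in> r" by (rule L_mono)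
      then have "(b, a) \<in> r" using ab'(3,4) by simp
      then show False using ab co_antisym[OF cor] unfolding olt_def by blast
    qed
    have ne: "a \<noteq> b" using ab unfolding olt_def by blast
    have "D2 \<alpha> \<beta> = e a b" using ne ab' unfolding D2_def by auto
    then have ej: "(e a b, j) \<in> k" using H'[OF ab'(1,2) lt] by simp
    note E = e_props(1)[OF LIlim[OF a] LIlim[OF b] ab]
    have "(ii b, j) \<in> k" using co_trans[OF cok _ ej] E by blast
    moreover have "a \<in> lim_pts r (C b j)" using lim_mono[OF LIlim[OF b] _ ej] E by blast
    ultimately show ?thesis by blast
  qed
  have above: "\<exists>b\<in>LI. olt r \<beta> b" if bF: "\<beta> \<in> Field r" for \<beta>
  proof -
    from bspec[OF Icof bF] obtain \<gamma> where g1: "\<gamma> \<in> I" and g2: "(\<beta>, \<gamma>) \<in> r" by (elim bexE)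
    have gF: "\<gamma> \<in> Field r" using IF g1 by (rule subsetD)
    have "olt r \<gamma> (L \<gamma>)" using L_props[OF gF] by (rule conjunct2)
    then have lt: "olt r \<beta> (L \<gamma>)" by (rule le_olt_trans[OF cor g2])
    have "L \<gamma> \<in> LI" unfolding LI_def using g1 by (rule imageI)
    then show ?thesis using lt by (rule bexI[rotated])
  qed
  have LIF: "b \<in> Field r" if "b \<in> LI" for b using LIlim[OF that] unfolding is_limit_def by blast
  have K2: "(ii b, j) \<in> k" if b: "b \<in> LI" for b
  proof -
    obtain b' where b': "b' \<in> LI" "olt r b b'" using above[OF LIF[OF b]] by blast
    note K = K1[OF b b'(1) b'(2)]
    show ?thesis using S4[OF LIlim[OF b] LIlim[OF b'(1)] b'(2)] K by blast
  qed
  have club: "club_in r (C b j) b" if "b \<in> LI" for b using S2[OF LIlim[OF that] K2[OF that]] .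
  have Cbelow: "C b j \<subseteq> {\<xi>. olt r \<xi> b}" if "b \<in> LI" for b using club[OF that] unfolding club_in_def by blast
  define D where "D = (\<Union>b\<in>LI. C b j)"
  have Q: "D \<inter> {\<xi>. olt r \<xi> b} = C b j" if b: "b \<in> LI" for b
  proof
    show "C b j \<subseteq> D \<inter> {\<xi>. olt r \<xi> b}" using Cbelow[OF b] b unfolding D_def by blast
    show "D \<inter> {\<xi>. olt r \<xi> b} \<subseteq> C b j"
    proof
      fix \<xi> assume "\<xi> \<in> D \<inter> {\<xi>. olt r \<xi> b}"
      then obtain b' where b': "b' \<in> LI" "\<xi> \<in> C b' j" and xb: "olt r \<xi> b" unfolding D_def by blast
      have xb': "olt r \<xi> b'" using Cbelow[OF b'(1)] b'(2) by blast
      consider "b = b'" | "olt r b' b" | "olt r b b'"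
        using co_total[OF cor LIF[OF b] LIF[OF b'(1)]] unfolding olt_def by blast
      then show "\<xi> \<in> C b j"
      proof cases
        case 1 then show ?thesis using b' by simp
      next
        case 2
        have "C b j \<inter> {\<xi>. olt r \<xi> b'} = C b' j"
          using S4[OF LIlim[OF b'(1)] LIlim[OF b] 2 K2[OF b]] K1[OF b'(1) b 2] by blast
        then show ?thesis using b'(2) by blast
      next
        case 3
        have "C b' j \<inter> {\<xi>. olt r \<xi> b} = C b j"
          using S4[OF LIlim[OF b] LIlim[OF b'(1)] 3 K2[OF b'(1)]] K1[OF b b'(1) 3] by blast
        then show ?thesis using b'(2) xb by blast
      qed
    qed
  qed
  have DF: "D \<subseteq> Field r"
  proof
    fix \<xi> assume "\<xi> \<in> D"
    then obtain b where "b \<in> LI" "\<xi> \<in> C b j" unfolding D_def by blast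
    then have "olt r \<xi> b" using Cbelow by blast
    then show "\<xi> \<in> Field r" using olt_field[of r \<xi> b] by blast
  qed
  have ct: "club_top r D"
    unfolding club_top_def
  proof (intro conjI ballI impI)
    show "D \<subseteq> Field r" by (rule DF)
  next
    fix \<beta> assume bF: "\<beta> \<in> Field r"
    obtain b where b: "b \<in> LI" "olt r \<beta> b" using above[OF bF] by blast
    obtain b' where b': "b' \<in> LI" "olt r b b'" using above[OF LIF[OF b(1)]] by blast
    have "b \<in> C b' j" using K1[OF b(1) b'] unfolding lim_pts_def by blast
    then have "b \<in> D" using b'(1) unfolding D_def by blast
    then show "\<exists>\<gamma>\<in>D. (\<beta>, \<gamma>) \<in> r" using b(2) unfolding olt_def by blast
  next
    fix \<beta> assume bF: "\<beta> \<in> Field r" and acc: "acc_pt r D \<beta>"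
    obtain b where b: "b \<in> LI" "olt r \<beta> b" using above[OF bF] by blast
    have "acc_pt r (C b j) \<beta>" using acc_restrict[OF cor acc b(2)] Q[OF b(1)] by blast
    then have "\<beta> \<in> C b j" using club[OF b(1)] b(2) unfolding club_in_def by blast
    then show "\<beta> \<in> D" using b(1) unfolding D_def by blast
  qed
  have thr: "\<forall>\<alpha>\<in>lim_pts r D. \<exists>j. (ii \<alpha>, j) \<in> k \<and> D \<inter> {\<xi>. olt r \<xi> \<alpha>} = C \<alpha> j"
  proof
    fix \<alpha> assume a: "\<alpha> \<in> lim_pts r D"
    then have aD: "\<alpha> \<in> D" and acc: "acc_pt r D \<alpha>" unfolding lim_pts_def by blast+
    have aF: "\<alpha> \<in> Field r" using aD DF by blast
    obtain b where b: "b \<in> LI" "olt r \<alpha> b" using above[OF aF] by blast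
    have aC: "\<alpha> \<in> C b j" using Q[OF b(1)] aD b(2) by blast
    have accC: "acc_pt r (C b j) \<alpha>" using acc_restrict[OF cor acc b(2)] Q[OF b(1)] by blast
    have al: "is_limit r \<alpha>" using aF acc unfolding is_limit_def acc_pt_def by blast
    have S: "(ii \<alpha>, j) \<in> k \<and> C b j \<inter> {\<xi>. olt r \<xi> \<alpha>} = C \<alpha> j"
      using S4[OF al LIlim[OF b(1)] b(2) K2[OF b(1)]] aC accC unfolding lim_pts_def by blast
    have "D \<inter> {\<xi>. olt r \<xi> \<alpha>} = (D \<inter> {\<xi>. olt r \<xi> b}) \<inter> {\<xi>. olt r \<xi> \<alpha>}"
      using olt_trans[OF cor _ b(2)] by blast
    also have "\<dots> = C b j \<inter> {\<xi>. olt r \<xi> \<alpha>}" using Q[OF b(1)] by simp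
    finally show "\<exists>j. (ii \<alpha>, j) \<in> k \<and> D \<inter> {\<xi>. olt r \<xi> \<alpha>} = C \<alpha> j" using S by blast
  qed
  show False using S6 ct thr by blast
qed

end

theorem mainTheorem9:
  fixes r :: "'a rel" and k :: "'b rel"
  assumes "Cinfinite r" and "regularCard r"
    and "Cinfinite k" and "regularCard k"
    and "(k, r) \<in> ordLess"
    and "square_ind r k"
  shows "\<exists>d :: 'a set \<Rightarrow> 'b.
     (\<forall>\<alpha>\<in>Field r. \<forall>\<beta>\<in>Field r. \<alpha> \<noteq> \<beta> \<longrightarrow> d {\<alpha>, \<beta>} \<in> Field k) \<and>
     (\<forall>\<alpha> \<beta> \<gamma>. olt r \<alpha> \<beta> \<longrightarrow> olt r \<beta> \<gamma> \<longrightarrow> \<gamma> \<in> Field r \<longrightarrow>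
        (d {\<alpha>, \<gamma>}, d {\<alpha>, \<beta>}) \<in> k \<or> (d {\<alpha>, \<gamma>}, d {\<beta>, \<gamma>}) \<in> k) \<and>
     (\<forall>\<alpha> \<beta> \<gamma>. olt r \<alpha> \<beta> \<longrightarrow> olt r \<beta> \<gamma> \<longrightarrow> \<gamma> \<in> Field r \<longrightarrow>
        (d {\<alpha>, \<beta>}, d {\<alpha>, \<gamma>}) \<in> k \<or> (d {\<alpha>, \<beta>}, d {\<beta>, \<gamma>}) \<in> k) \<and>
     (\<forall>I. I \<subseteq> Field r \<longrightarrow> (\<forall>\<beta>\<in>Field r. \<exists>\<gamma>\<in>I. (\<beta>, \<gamma>) \<in> r) \<longrightarrow>
        (\<forall>j\<in>Field k. \<exists>\<alpha>\<in>I. \<exists>\<beta>\<in>I. \<alpha> \<noteq> \<beta> \<and> (j, d {\<alpha>, \<beta>}) \<in> k))"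
proof -
  obtain C ii where sq: "square_ind_seq r k C ii" using assms(6) unfolding square_ind_def by blast
  interpret S: sqctx r k C ii using assms(1,2,3,5) sq by unfold_locales
  have co: "Card_order r" using assms(1) by simp
  have P0: "\<forall>\<alpha>\<in>Field r. \<forall>\<beta>\<in>Field r. \<alpha> \<noteq> \<beta> \<longrightarrow> S.d {\<alpha>, \<beta>} \<in> Field k"
  proof (intro ballI impI)
    fix \<alpha> \<beta> assume F: "\<alpha> \<in> Field r" "\<beta> \<in> Field r" and ne: "\<alpha> \<noteq> \<beta>"
    from co_total[OF co F] ne have "olt r \<alpha> \<beta> \<or> olt r \<beta> \<alpha>" unfolding olt_def by blast
    then show "S.d {\<alpha>, \<beta>} \<in> Field k"
    proof
      assume h: "olt r \<alpha> \<beta>" show ?thesis using S.d_eq[OF h] S.D2_field[OF h] by simp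
    next
      assume h: "olt r \<beta> \<alpha>" show ?thesis using S.d_eq[OF h] S.D2_field[OF h] by (simp add: insert_commute)
    qed
  qed
  have P1: "\<forall>\<alpha> \<beta> \<gamma>. olt r \<alpha> \<beta> \<longrightarrow> olt r \<beta> \<gamma> \<longrightarrow> \<gamma> \<in> Field r \<longrightarrow>
        (S.d {\<alpha>, \<gamma>}, S.d {\<alpha>, \<beta>}) \<in> k \<or> (S.d {\<alpha>, \<gamma>}, S.d {\<beta>, \<gamma>}) \<in> k"
  proof (intro allI impI)
    fix \<alpha> \<beta> \<gamma> assume ab: "olt r \<alpha> \<beta>" and bc: "olt r \<beta> \<gamma>"
    show "(S.d {\<alpha>, \<gamma>}, S.d {\<alpha>, \<beta>}) \<in> k \<or> (S.d {\<alpha>, \<gamma>}, S.d {\<beta>, \<gamma>}) \<in> k"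
      using S.prop1[OF ab bc] S.d_eq[OF ab] S.d_eq[OF bc] S.d_eq[OF olt_trans[OF co ab bc]] by simp
  qed
  have P2: "\<forall>\<alpha> \<beta> \<gamma>. olt r \<alpha> \<beta> \<longrightarrow> olt r \<beta> \<gamma> \<longrightarrow> \<gamma> \<in> Field r \<longrightarrow>
        (S.d {\<alpha>, \<beta>}, S.d {\<alpha>, \<gamma>}) \<in> k \<or> (S.d {\<alpha>, \<beta>}, S.d {\<beta>, \<gamma>}) \<in> k"
  proof (intro allI impI)
    fix \<alpha> \<beta> \<gamma> assume ab: "olt r \<alpha> \<beta>" and bc: "olt r \<beta> \<gamma>"
    show "(S.d {\<alpha>, \<beta>}, S.d {\<alpha>, \<gamma>}) \<in> k \<or> (S.d {\<alpha>, \<beta>}, S.d {\<beta>, \<gamma>}) \<in> k"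
      using S.prop2[OF ab bc] S.d_eq[OF ab] S.d_eq[OF bc] S.d_eq[OF olt_trans[OF co ab bc]] by simp
  qed
  have P3: "\<forall>I. I \<subseteq> Field r \<longrightarrow> (\<forall>\<beta>\<in>Field r. \<exists>\<gamma>\<in>I. (\<beta>, \<gamma>) \<in> r) \<longrightarrow>
        (\<forall>j\<in>Field k. \<exists>\<alpha>\<in>I. \<exists>\<beta>\<in>I. \<alpha> \<noteq> \<beta> \<and> (j, S.d {\<alpha>, \<beta>}) \<in> k)"
    using S.prop3 by blast
  show ?thesis by (rule exI[of _ S.d]) (intro conjI P0 P1 P2 P3)
qed

end
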